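(* Let $\Sigma=\mathbb{S}^{n-1}\times\mathbb{R}\subset\mathbb{R}^{n+1}$ be a self-shrinker, with $x_n$ the coordinate on the $\mathbb{R}$ factor. For each $a\in[0,\sqrt2)$, the region $\{x_n>a\}\subset\Sigma$ is unstable. Moreover, for each such $a$ there exists $b_a>a$ such that the region $\{a<x_n<b\}\subset\Sigma$ is unstable for every $b>b_a$.
   Context: $\mathbb{S}^{n-1}$ is the round sphere of radius $\sqrt{2(n-1)}$ centered at the origin of $\mathbb{R}^n$. Stability operator: $Lf=\Delta f-\tfrac12\langle\vec x,\nabla f\rangle+(|A|^2+\tfrac12)f$. A region $\Omega$ is stable if there exists a function $u$ with $Lu=0$ and $u>0$ on $\Omega$; it is unstable otherwise. For a bounded region, instability means $L$ has a negative Dirichlet eigenvalue there (eigenvalue convention $Lu=-\lambda u$). *)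

theory Defs
  imports "HOL-Analysis.Analysis"
begin

text \<open>Ambient space R^(n+1) = R^n x R, with R^n modelled by a euclidean space 'a,
  n = DIM('a). The last coordinate x_n is snd.\<close>

definition cyl_rad :: "'a::euclidean_space itself \<Rightarrow> real" where
  "cyl_rad T = sqrt (2 * (real DIM('a) - 1))"

definition cyl :: "('a::euclidean_space \<times> real) set" where
  "cyl = {p. norm (fst p) = cyl_rad TYPE('a)}"

text \<open>|A|^2 of the cylinder: principal curvatures 1/r (multiplicity n-1) and 0.\<close>
definition cyl_A2 :: "'a::euclidean_space itself \<Rightarrow> real" where
  "cyl_A2 T = (real DIM('a) - 1) / (cyl_rad T)^2"

text \<open>Extension of a function on Sigma constant along rays from the axis (0-homogeneous in y).
  For such an extension, the Euclidean Laplacian at a point of Sigma equals the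
  Laplace-Beltrami operator of Sigma, and the Euclidean gradient is the tangential gradient.\<close>
definition cyl_ext :: "('a::euclidean_space \<times> real \<Rightarrow> real) \<Rightarrow> ('a \<times> real \<Rightarrow> real)" where
  "cyl_ext u = (\<lambda>(y, z). u ((cyl_rad TYPE('a) / norm y) *\<^sub>R y, z))"

definition D1 :: "('b::euclidean_space \<Rightarrow> real) \<Rightarrow> 'b \<Rightarrow> 'b \<Rightarrow> real" where
  "D1 f v x = frechet_derivative f (at x) v"

definition D2 :: "('b::euclidean_space \<Rightarrow> real) \<Rightarrow> 'b \<Rightarrow> 'b \<Rightarrow> 'b \<Rightarrow> real" where
  "D2 f v w x = frechet_derivative (\<lambda>x. D1 f v x) (at x) w"

definition C2_on :: "'b::euclidean_space set \<Rightarrow> ('b \<Rightarrow> real) \<Rightarrow> bool" where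
  "C2_on U f \<longleftrightarrow> f differentiable_on U \<and>
     (\<forall>v\<in>Basis. (\<lambda>x. D1 f v x) differentiable_on U \<and>
        (\<forall>w\<in>Basis. continuous_on U (D2 f v w)))"

definition laplacian :: "('b::euclidean_space \<Rightarrow> real) \<Rightarrow> 'b \<Rightarrow> real" where
  "laplacian f x = (\<Sum>b\<in>Basis. D2 f b b x)"

definition stab_op :: "('a::euclidean_space \<times> real \<Rightarrow> real) \<Rightarrow> 'a \<times> real \<Rightarrow> real" where
  "stab_op u p = laplacian (cyl_ext u) p - (1/2) * D1 (cyl_ext u) p p
                 + (cyl_A2 TYPE('a) + 1/2) * u p"

definition cyl_cone :: "('a::euclidean_space \<times> real) set \<Rightarrow> ('a \<times> real) set" where
  "cyl_cone \<Omega> = {(y, z). y \<noteq> 0 \<and> ((cyl_rad TYPE('a) / norm y) *\<^sub>R y, z) \<in> \<Omega>}"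

definition stable_region :: "('a::euclidean_space \<times> real) set \<Rightarrow> bool" where
  "stable_region \<Omega> \<longleftrightarrow> (\<exists>u. C2_on (cyl_cone \<Omega>) (cyl_ext u) \<and>
      (\<forall>p\<in>\<Omega>. u p > 0 \<and> stab_op u p = 0))"

end

theory Submission
  imports Defs
begin

lemma line_deriv:
  fixes G :: "'b::euclidean_space \<Rightarrow> real"
  assumes "G differentiable (at (p + s *\<^sub>R v))"
  shows "((\<lambda>s. G (p + s *\<^sub>R v)) has_real_derivative frechet_derivative G (at (p + s *\<^sub>R v)) v) (at s)"
proof -
  have G: "(G has_derivative frechet_derivative G (at (p + s *\<^sub>R v))) (at (p + s *\<^sub>R v))"
    using assms frechet_derivative_works by blast
  have L: "((\<lambda>s. p + s *\<^sub>R v) has_derivative (\<lambda>h. h *\<^sub>R v)) (at s)"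
    by (auto intro!: derivative_eq_intros)
  have "((\<lambda>s. G (p + s *\<^sub>R v)) has_derivative (\<lambda>h. frechet_derivative G (at (p + s *\<^sub>R v)) (h *\<^sub>R v))) (at s)"
    using has_derivative_compose[OF L G] by simp
  moreover have "(\<lambda>h. frechet_derivative G (at (p + s *\<^sub>R v)) (h *\<^sub>R v)) = (*) (frechet_derivative G (at (p + s *\<^sub>R v)) v)"
    using has_derivative_linear[OF G] by (auto simp: linear_scale mult.commute)
  ultimately show ?thesis unfolding has_field_derivative_def by simp
qed

lemma second_deriv_min:
  fixes H H1 :: "real \<Rightarrow> real"
  assumes "\<delta> > 0" and d: "\<And>s. \<bar>s\<bar> < \<delta> \<Longrightarrow> (H has_real_derivative H1 s) (at s)"
    and h0: "H1 0 = 0" and d2: "(H1 has_real_derivative H2) (at 0)"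
    and mn: "\<And>s. \<bar>s\<bar> < \<delta> \<Longrightarrow> H 0 \<le> H s"
  shows "H2 \<ge> 0"
proof (rule ccontr)
  assume "\<not> H2 \<ge> 0"
  hence neg: "H2 < 0" by simp
  have "((\<lambda>y. (H1 y - H1 0) / (y - 0)) \<longlongrightarrow> H2) (at 0)"
    using d2 has_field_derivative_iff by fastforce
  hence "((\<lambda>y. H1 y / y) \<longlongrightarrow> H2) (at_right 0)"
    using h0 by (simp add: filterlim_at_split)
  hence "eventually (\<lambda>y. H1 y / y < 0) (at_right 0)"
    using neg order_tendstoD(2) by blast
  then obtain \<eta> where \<eta>: "\<eta> > 0" "\<And>y. 0 < y \<Longrightarrow> y < \<eta> \<Longrightarrow> H1 y / y < 0"
    unfolding eventually_at_right_field by auto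
  define s where "s = min \<eta> \<delta> / 2"
  have s: "0 < s" "s < \<eta>" "s < \<delta>" using \<eta> assms(1) by (auto simp: s_def)
  have "\<And>x. 0 \<le> x \<Longrightarrow> x \<le> s \<Longrightarrow> (H has_real_derivative H1 x) (at x)"
    using s d by auto
  from MVT2[OF s(1) this] obtain z where z: "0 < z" "z < s" "H s - H 0 = (s - 0) * H1 z" by auto
  have "H1 z / z < 0" using \<eta>(2)[of z] z s by auto
  hence "H1 z < 0" using z by (simp add: divide_less_0_iff)
  hence "s * H1 z < 0" using s(1) by (simp add: mult_pos_neg)
  hence "H s < H 0" using z by simp
  moreover have "H 0 \<le> H s" using mn s by auto
  ultimately show False by simp
qed

lemma dir_min:
  fixes F :: "('a::euclidean_space \<times> real) \<Rightarrow> real" and \<phi> \<phi>1 \<phi>2 :: "real \<Rightarrow> real"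
  assumes S: "open S" "p \<in> S" and dF: "\<forall>x\<in>S. F differentiable (at x)" and "\<epsilon> > 0"
    and mn: "\<forall>q\<in>ball p \<epsilon>. F p - t*\<phi>(snd p) \<le> F q - t*\<phi>(snd q)"
    and d1: "\<And>z. (\<phi> has_real_derivative \<phi>1 z) (at z)"
    and d2: "\<And>z. (\<phi>1 has_real_derivative \<phi>2 z) (at z)"
  shows "D1 F v p = t*\<phi>1(snd p)* snd v"
    and "(\<lambda>x. D1 F v x) differentiable (at p) \<Longrightarrow> D2 F v v p \<ge> t*\<phi>2(snd p)*(snd v)^2"
proof -
  obtain e where e: "e > 0" "ball p e \<subseteq> S" using S open_contains_ball by blast
  define \<delta> where "\<delta> = min e \<epsilon> / (norm v + 1)"
  have nv: "norm v + 1 > 0" by (simp add: add_nonneg_pos)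
  have \<delta>: "\<delta> > 0" unfolding \<delta>_def using e \<open>\<epsilon>>0\<close> nv by (intro divide_pos_pos) auto
  have inb: "p + s *\<^sub>R v \<in> ball p e \<and> p + s *\<^sub>R v \<in> ball p \<epsilon>" if "\<bar>s\<bar> < \<delta>" for s
  proof -
    have "dist p (p + s *\<^sub>R v) = \<bar>s\<bar> * norm v" by (simp add: dist_norm)
    also have "\<dots> \<le> \<bar>s\<bar> * (norm v + 1)" by (simp add: mult_left_mono)
    also have "\<dots> < \<delta> * (norm v + 1)" using that nv by (simp add: mult_strict_right_mono)
    also have "\<dots> = min e \<epsilon>" using nv by (simp add: \<delta>_def)
    finally show ?thesis by simp
  qed
  define H where "H s = F (p + s *\<^sub>R v) - t*\<phi>(snd p + s * snd v)" for s
  define H1 where "H1 s = D1 F v (p + s *\<^sub>R v) - t*\<phi>1(snd p + s * snd v) * snd v" for s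
  have phid: "((\<lambda>s. \<phi>(snd p + s * snd v)) has_real_derivative \<phi>1(snd p + s * snd v) * snd v) (at s)" for s
    by (rule DERIV_chain2[OF d1]) (auto intro!: derivative_eq_intros)
  have phid1: "((\<lambda>s. \<phi>1(snd p + s * snd v)) has_real_derivative \<phi>2(snd p + s * snd v) * snd v) (at s)" for s
    by (rule DERIV_chain2[OF d2]) (auto intro!: derivative_eq_intros)
  have Hd: "(H has_real_derivative H1 s) (at s)" if "\<bar>s\<bar> < \<delta>" for s
  proof -
    have "F differentiable (at (p + s *\<^sub>R v))" using dF inb[OF that] e by auto
    from line_deriv[OF this] have "((\<lambda>s. F (p + s *\<^sub>R v)) has_real_derivative D1 F v (p + s *\<^sub>R v)) (at s)"
      by (simp add: D1_def)
    from DERIV_diff[OF this DERIV_cmult[OF phid, of t]] show ?thesis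
      unfolding H_def[abs_def] H1_def by (simp add: mult.assoc)
  qed
  have Hmin: "H 0 \<le> H s" if "\<bar>s\<bar> < \<delta>" for s
    using mn inb[OF that] unfolding H_def by (auto dest!: bspec[of _ _ "p + s *\<^sub>R v"])
  have "H1 0 = 0"
    by (rule DERIV_local_min[OF Hd[of 0] \<delta>]) (use \<delta> Hmin in auto)
  thus eq1: "D1 F v p = t*\<phi>1(snd p)* snd v" by (simp add: H1_def)
  assume dd: "(\<lambda>x. D1 F v x) differentiable (at p)"
  from line_deriv[of "\<lambda>x. D1 F v x" p 0 v] dd
  have "((\<lambda>s. D1 F v (p + s *\<^sub>R v)) has_real_derivative D2 F v v p) (at 0)"
    by (simp add: D2_def)
  from DERIV_diff[OF this DERIV_cmult[OF DERIV_cmult_right[OF phid1, of "snd v"], of t]]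
  have "(H1 has_real_derivative D2 F v v p - t*\<phi>2(snd p)*(snd v)^2) (at 0)"
    unfolding H1_def[abs_def] by (simp add: power2_eq_square mult_ac)
  from second_deriv_min[OF \<delta> Hd \<open>H1 0 = 0\<close> this Hmin] show "D2 F v v p \<ge> t*\<phi>2(snd p)*(snd v)^2"
    by simp
qed

lemma sum_snd_sq: "(\<Sum>b\<in>(Basis::('a::euclidean_space \<times> real) set). (snd b)^2) = 1"
proof -
  have i: "inner ((0::'a),(1::real)) b = snd b" for b :: "'a \<times> real"
    by (simp add: inner_prod_def)
  have "inner ((0::'a),(1::real)) (0,1) = (\<Sum>b\<in>(Basis::('a \<times> real) set). inner ((0::'a),(1::real)) b * inner ((0::'a),(1::real)) b)"
    by (rule euclidean_inner)
  thus ?thesis by (simp add: i power2_eq_square inner_prod_def)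
qed

lemma key:
  fixes \<Omega> :: "('a::euclidean_space \<times> real) set"
  assumes dim: "DIM('a) \<ge> 2" and \<Omega>c: "\<Omega> \<subseteq> cyl" and op: "open (cyl_cone \<Omega>)"
   and strip: "{q \<in> cyl. c \<le> snd q \<and> snd q \<le> d} \<subseteq> \<Omega>"
   and c: "0 < c" "c < d" "c^2 < 2" "d*(2-c^2) > 8"
  shows "\<not> stable_region \<Omega>"
proof
  assume "stable_region \<Omega>"
  then obtain u where C2: "C2_on (cyl_cone \<Omega>) (cyl_ext u)" and pos: "\<forall>p\<in>\<Omega>. u p > 0 \<and> stab_op u p = 0"
    unfolding stable_region_def by blast
  define F where "F = cyl_ext u"
  define r where "r = cyl_rad TYPE('a)"
  define U where "U = cyl_cone \<Omega>"
  define \<phi> where "\<phi> z = (z^2 - c^2)*(d - z)" for z :: real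
  define \<phi>1 where "\<phi>1 z = -3*z^2 + 2*d*z + c^2" for z :: real
  define \<phi>2 where "\<phi>2 z = -6*z + 2*d" for z :: real
  have d1: "(\<phi> has_real_derivative \<phi>1 z) (at z)" for z
    unfolding \<phi>_def[abs_def] \<phi>1_def
    by (auto intro!: derivative_eq_intros simp: power2_eq_square algebra_simps)
  have d2: "(\<phi>1 has_real_derivative \<phi>2 z) (at z)" for z
    unfolding \<phi>1_def[abs_def] \<phi>2_def
    by (auto intro!: derivative_eq_intros simp: power2_eq_square algebra_simps)
  have dimr: "real DIM('a) - 1 > 0" using dim by simp
  have r2: "r^2 = 2*(real DIM('a) - 1)" using dimr by (simp add: r_def cyl_rad_def)
  have rpos: "r > 0" using dimr by (simp add: r_def cyl_rad_def)
  have A2: "cyl_A2 TYPE('a) = 1/2"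
  proof -
    have "cyl_A2 TYPE('a) = (real DIM('a) - 1)/r^2" by (simp add: cyl_A2_def r_def)
    thus ?thesis using r2 dimr by simp
  qed
  have cylI: "q \<in> cyl \<longleftrightarrow> norm (fst q) = r" for q :: "'a \<times> real" by (simp add: cyl_def r_def)
  have Fdef: "F (y,z) = u ((r / norm y) *\<^sub>R y, z)" for y z by (simp add: F_def cyl_ext_def r_def)
  have Fcyl: "F q = u q" if "q \<in> cyl" for q
  proof -
    obtain y z where q: "q = (y,z)" by (cases q)
    have "norm y = r" using that q cylI by simp
    thus ?thesis using q Fdef rpos by simp
  qed
  have Uproj: "(y,z) \<in> U \<longleftrightarrow> y \<noteq> 0 \<and> ((r/norm y) *\<^sub>R y, z) \<in> \<Omega>" for y z
    by (simp add: U_def cyl_cone_def r_def)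
  have projcyl: "((r/norm y) *\<^sub>R y, z) \<in> cyl" if "y \<noteq> 0" for y :: 'a and z
    using that rpos by (simp add: cylI)
  have \<Omega>U: "\<Omega> \<subseteq> U"
  proof
    fix q assume q\<Omega>: "q \<in> \<Omega>"
    obtain y z where q: "q = (y,z)" by (cases q)
    have "norm y = r" using q\<Omega> \<Omega>c q cylI by auto
    thus "q \<in> U" using q q\<Omega> rpos Uproj by auto
  qed
  have opU: "open U" using op U_def by simp
  have dF: "\<forall>x\<in>U. F differentiable (at x)"
    using C2 differentiable_on_eq_differentiable_at[OF opU] unfolding C2_on_def F_def U_def by blast
  have dD1: "\<forall>v\<in>Basis. \<forall>x\<in>U. (\<lambda>x. D1 F v x) differentiable (at x)"
    using C2 differentiable_on_eq_differentiable_at[OF opU] unfolding C2_on_def F_def U_def by blast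
  have contF: "continuous_on U F"
    using C2 differentiable_imp_continuous_on unfolding C2_on_def F_def U_def by blast
  define K where "K = {q\<in>(cyl :: ('a \<times> real) set). c \<le> snd q \<and> snd q \<le> d}"
  have KU: "K \<subseteq> U" using strip \<Omega>U K_def by blast
  have Fpos: "F q > 0" if "q \<in> K" for q
    using that strip pos Fcyl K_def by auto
  have clcyl: "closed (cyl :: ('a \<times> real) set)"
  proof -
    have "closed {q :: 'a \<times> real. norm (fst q) = r}"
      by (intro closed_Collect_eq continuous_intros)
    moreover have "cyl = {q :: 'a \<times> real. norm (fst q) = r}" using cylI by blast
    ultimately show ?thesis by simp
  qed
  have Keq: "K = (cball 0 r \<times> {c..d}) \<inter> cyl"
    using cylI by (auto simp: K_def)
  have Kcomp: "compact K" unfolding Keq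
    by (intro compact_Int_closed compact_Times compact_cball compact_Icc clcyl)
  obtain e :: 'a where e: "e \<in> Basis" using nonempty_Basis by blast
  define zm where "zm = (c+d)/2"
  define q1 where "q1 = (r *\<^sub>R e, zm)"
  have q1K: "q1 \<in> K" using e rpos c by (simp add: q1_def K_def cylI zm_def)
  have \<phi>pos: "\<phi> z > 0" if "c < z" "z < d" for z
  proof -
    have "z^2 > c^2" using that c by (simp add: power_strict_mono)
    thus ?thesis using that by (simp add: \<phi>_def)
  qed
  obtain q0 where q0: "q0 \<in> K" "\<forall>q\<in>K. F q0 \<le> F q"
    using continuous_attains_inf[OF Kcomp _ continuous_on_subset[OF contF KU]] q1K by blast
  define m where "m = F q0"
  have mpos: "m > 0" using Fpos q0 m_def by simp
  have zmpos: "\<phi> zm > 0" using \<phi>pos c by (simp add: zm_def)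
  define t1 where "t1 = F q1 / \<phi> zm"
  have Fq1: "F q1 \<ge> m" using q0 q1K m_def by simp
  have t1pos: "t1 > 0" using Fq1 mpos zmpos t1_def by simp
  define \<delta> where "\<delta> = m / (t1 + 1)"
  have \<delta>pos: "\<delta> > 0" using mpos t1pos \<delta>_def by simp
  define K2 where "K2 = K \<inter> {q. \<delta> \<le> \<phi> (snd q)}"
  have K2comp: "compact K2" unfolding K2_def
    by (intro compact_Int_closed Kcomp closed_Collect_le continuous_intros) (simp add: \<phi>_def continuous_intros)+
  have q1K2: "q1 \<in> K2"
  proof -
    have "F q1 = t1 * \<phi> zm" using zmpos t1_def by simp
    hence "m \<le> \<phi> zm * (t1 + 1)" using Fq1 zmpos by (simp add: algebra_simps)
    hence "\<delta> \<le> \<phi> zm" using t1pos by (simp add: \<delta>_def divide_le_eq)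
    thus ?thesis using q1K by (simp add: K2_def q1_def)
  qed
  have K2in: "c < snd q \<and> snd q < d \<and> \<phi> (snd q) > 0" if "q \<in> K2" for q
  proof -
    have "\<phi> (snd q) > 0" using that \<delta>pos by (auto simp: K2_def)
    moreover have "c \<le> snd q" "snd q \<le> d" using that by (auto simp: K2_def K_def)
    ultimately show ?thesis by (cases "snd q = c"; cases "snd q = d") (auto simp: \<phi>_def)
  qed
  have contR: "continuous_on K2 (\<lambda>q. F q / \<phi> (snd q))"
  proof (intro continuous_on_divide)
    show "continuous_on K2 F" using contF KU K2_def continuous_on_subset by blast
    show "continuous_on K2 (\<lambda>q. \<phi> (snd q))" unfolding \<phi>_def by (intro continuous_intros)
    show "\<forall>x\<in>K2. \<phi> (snd x) \<noteq> 0" using K2in by fastforce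
  qed
  obtain qs where qs: "qs \<in> K2" "\<forall>q\<in>K2. F qs / \<phi> (snd qs) \<le> F q / \<phi> (snd q)"
    using continuous_attains_inf[OF K2comp _ contR] q1K2 by blast
  define t where "t = F qs / \<phi> (snd qs)"
  have qsK: "qs \<in> K" using qs K2_def by simp
  have tle: "t \<le> t1" using qs(2)[rule_format, OF q1K2] unfolding t_def t1_def by (simp add: q1_def)
  have tpos: "t > 0" using Fpos[OF qsK] K2in[OF qs(1)] t_def by simp
  have ineq: "t * \<phi> (snd q) \<le> F q" if "q \<in> cyl" "c < snd q" "snd q < d" for q
  proof (cases "\<delta> \<le> \<phi> (snd q)")
    case True
    hence "q \<in> K2" using that by (simp add: K2_def K_def)
    hence "t \<le> F q / \<phi> (snd q)" using qs t_def by simp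
    moreover have "\<phi> (snd q) > 0" using \<phi>pos that by simp
    ultimately show ?thesis by (simp add: le_divide_eq)
  next
    case False
    have qK: "q \<in> K" using that by (simp add: K_def)
    have "t * \<phi> (snd q) \<le> t * \<delta>" using False tpos by simp
    also have "\<dots> \<le> t1 * \<delta>" using tle \<delta>pos by (simp add: mult_right_mono)
    also have "\<dots> < m" using t1pos mpos by (simp add: \<delta>_def field_simps)
    also have "\<dots> \<le> F q" using q0 qK m_def by simp
    finally show ?thesis by simp
  qed
  define z0 where "z0 = snd qs"
  have z0: "c < z0" "z0 < d" "\<phi> z0 > 0" using K2in[OF qs(1)] z0_def by auto
  have Fqs: "F qs = t * \<phi> z0" using t_def z0 z0_def by simp
  have qscyl: "norm (fst qs) = r" using qsK K_def cylI by simp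
  define \<epsilon> where "\<epsilon> = min r (min (z0 - c) (d - z0))"
  have \<epsilon>pos: "\<epsilon> > 0" using rpos z0 \<epsilon>_def by simp
  have mn: "\<forall>q\<in>ball qs \<epsilon>. F qs - t*\<phi>(snd qs) \<le> F q - t*\<phi>(snd q)"
  proof
    fix q assume "q \<in> ball qs \<epsilon>"
    hence dq: "dist qs q < \<epsilon>" by simp
    obtain y z where q: "q = (y,z)" by (cases q)
    have "dist (fst qs) y < r" using dq dist_fst_le[of qs q] q \<epsilon>_def by simp
    hence y0: "y \<noteq> 0" using qscyl by (auto simp: dist_norm)
    have "dist (snd qs) z < min (z0 - c) (d - z0)" using dq dist_snd_le[of qs q] q \<epsilon>_def by simp
    hence zz: "c < z" "z < d" using z0_def by (auto simp: dist_real_def)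
    have "t * \<phi> z \<le> F ((r/norm y) *\<^sub>R y, z)"
      using ineq[OF projcyl[OF y0]] zz by simp
    also have "\<dots> = F q" using Fcyl[OF projcyl[OF y0]] Fdef q by simp
    finally show "F qs - t*\<phi>(snd qs) \<le> F q - t*\<phi>(snd q)" using Fqs z0_def q by simp
  qed
  have qsU: "qs \<in> U" using qsK KU by auto
  note DM = dir_min[OF opU qsU dF \<epsilon>pos mn d1 d2]
  have lap: "laplacian F qs \<ge> t * \<phi>2 z0"
  proof -
    have "(\<Sum>b\<in>(Basis::('a \<times> real) set). t * \<phi>2 z0 * (snd b)^2) \<le> laplacian F qs"
      unfolding laplacian_def
      by (rule sum_mono) (use DM(2) dD1 qsU z0_def in auto)
    moreover have "(\<Sum>b\<in>(Basis::('a \<times> real) set). t * \<phi>2 z0 * (snd b)^2) = t * \<phi>2 z0"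
      by (simp add: sum_distrib_left[symmetric] sum_snd_sq)
    ultimately show ?thesis by simp
  qed
  have D1qs: "D1 F qs qs = t * \<phi>1 z0 * z0" using DM(1)[of qs] z0_def by simp
  have "stab_op u qs = 0" using pos qsK KU strip K_def by auto
  hence st: "laplacian F qs - (1/2) * D1 F qs qs + u qs = 0"
    unfolding stab_op_def F_def[symmetric] A2 by simp
  have uqs: "u qs = t * \<phi> z0" using Fcyl qsK K_def Fqs by auto
  have Lphi: "\<phi>2 z0 - (1/2) * (\<phi>1 z0 * z0) + \<phi> z0 = z0*(z0^2 - 12)/2 + c^2*z0/2 + d*(2-c^2)"
    unfolding \<phi>_def \<phi>1_def \<phi>2_def by (simp add: power2_eq_square field_simps)
  have "z0^3 - 12*z0 + 16 = (z0-2)^2*(z0+4)" by (simp add: power2_eq_square power3_eq_cube algebra_simps)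
  hence "z0^3 - 12*z0 + 16 \<ge> 0" using z0 c by simp
  hence "z0*(z0^2 - 12)/2 \<ge> -8" by (simp add: power2_eq_square power3_eq_cube algebra_simps)
  moreover have "c^2*z0/2 \<ge> 0" using z0 c by simp
  ultimately have Lpos: "\<phi>2 z0 - (1/2) * (\<phi>1 z0 * z0) + \<phi> z0 > 0" using Lphi c by linarith
  have "0 = laplacian F qs - (1/2) * D1 F qs qs + u qs" using st by simp
  also have "\<dots> \<ge> t * (\<phi>2 z0 - (1/2) * (\<phi>1 z0 * z0) + \<phi> z0)"
    using lap D1qs uqs by (simp add: algebra_simps)
  finally show False using mult_pos_pos[OF tpos Lpos] by simp
qed

lemma cone_eq:
  assumes "DIM('a::euclidean_space) \<ge> 2"
  shows "cyl_cone {p \<in> (cyl :: ('a \<times> real) set). P (snd p)} = {q. fst q \<noteq> 0 \<and> P (snd q)}"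
proof -
  have r: "cyl_rad TYPE('a) > 0" using assms by (simp add: cyl_rad_def)
  show ?thesis using r by (auto simp: cyl_cone_def cyl_def)
qed

theorem proposition4p9:
  fixes a :: real
  assumes "DIM('a::euclidean_space) \<ge> 2"
    and "0 \<le> a" and "a < sqrt 2"
  shows "\<not> stable_region {p \<in> (cyl :: ('a \<times> real) set). snd p > a} \<and>
         (\<exists>ba > a. \<forall>b > ba. \<not> stable_region {p \<in> (cyl :: ('a \<times> real) set). a < snd p \<and> snd p < b})"
proof -
  define c where "c = (a + sqrt 2)/2"
  have c0: "0 < c" "a < c" "c < sqrt 2" using assms by (auto simp: c_def)
  have c2: "c^2 < 2"
  proof -
    have "c^2 < (sqrt 2)^2" using c0 by (intro power_strict_mono) auto
    thus ?thesis by simp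
  qed
  define d where "d = 8/(2-c^2) + c + 1"
  have cd: "c < d" using c2 by (simp add: d_def add_pos_pos)
  have d8: "d*(2-c^2) > 8"
  proof -
    have "d*(2-c^2) = 8 + (c+1)*(2-c^2)" using c2 by (simp add: d_def field_simps)
    moreover have "(c+1)*(2-c^2) > 0" using c0 c2 by simp
    ultimately show ?thesis by simp
  qed
  have part1: "\<not> stable_region {p \<in> (cyl :: ('a \<times> real) set). snd p > a}"
  proof (rule key[OF assms(1) _ _ _ c0(1) cd c2 d8])
    show "open (cyl_cone {p \<in> (cyl :: ('a \<times> real) set). snd p > a})"
      unfolding cone_eq[OF assms(1), of "\<lambda>z. a < z"]
      by (intro open_Collect_conj open_Collect_neq open_Collect_less continuous_intros)
  qed (use c0 in auto)
  have part2: "\<not> stable_region {p \<in> (cyl :: ('a \<times> real) set). a < snd p \<and> snd p < b}" if "b > d" for b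
  proof (rule key[OF assms(1) _ _ _ c0(1) cd c2 d8])
    show "open (cyl_cone {p \<in> (cyl :: ('a \<times> real) set). a < snd p \<and> snd p < b})"
      unfolding cone_eq[OF assms(1), of "\<lambda>z. a < z \<and> z < b"]
      by (intro open_Collect_conj open_Collect_neq open_Collect_less continuous_intros)
  qed (use c0 that in auto)
  have "d > a" using cd c0 by simp
  thus ?thesis using part1 part2 by blast
qed

end
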